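(* For $1\le i\le k$ let $G_i$ be an $r_i$-regular graph with $n_i\ge 2$ vertices and let $A_i$ be an Abelian group of order $n_i$. Let $r=\sum_{i=1}^k r_i$ and suppose $\exp(A_i)$ divides $r-r_i$ for every $1\le i\le k$. (a) If each $G_i$ is $A_i$-distance antimagic, then $G_1\Box\cdots\Box G_k$ is $A_1\times\cdots\times A_k$-distance antimagic. (b) If each $G_i$ is $A_i$-distance magic, then $G_1\Box\cdots\Box G_k$ is $A_1\times\cdots\times A_k$-distance magic.
   Context: The Cartesian product $G_1\Box\cdots\Box G_k$ has vertex set $V(G_1)\times\cdots\times V(G_k)$, with $(x_1,\ldots,x_k)$ and $(y_1,\ldots,y_k)$ adjacent iff they differ in exactly one coordinate $i$ and $x_iy_i\in E(G_i)$. $\exp(A)$ is the least positive integer $m$ with $mx=0$ for all $x\in A$. For a graph $G$ with $n$ vertices and an Abelian group $A$ of order $n$ (written additively), and a bijection $f:V(G)\to A$, the weight of $x$ is $w_f(x)=\sum_{y\in N(x)} f(y)$ computed in $A$ ($N(x)$ the open neighbourhood). $f$ is an $A$-distance antimagic labelling if all weights are pairwise distinct, and an $A$-distance magic labelling if all weights are equal. $G$ is $A$-distance antimagic (resp. magic) if it admits such a labelling. *)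

theory Defs
  imports "HOL-Algebra.Product_Groups" "HOL-Algebra.FiniteProduct"
begin

definition simple_graph :: "'v set \<Rightarrow> ('v \<Rightarrow> 'v \<Rightarrow> bool) \<Rightarrow> bool" where
  "simple_graph V E \<longleftrightarrow> finite V \<and> (\<forall>x y. E x y \<longrightarrow> x \<in> V \<and> y \<in> V)
     \<and> (\<forall>x y. E x y \<longrightarrow> E y x) \<and> (\<forall>x. \<not> E x x)"

definition nbhd :: "'v set \<Rightarrow> ('v \<Rightarrow> 'v \<Rightarrow> bool) \<Rightarrow> 'v \<Rightarrow> 'v set" where
  "nbhd V E x = {y \<in> V. E x y}"

definition regular :: "'v set \<Rightarrow> ('v \<Rightarrow> 'v \<Rightarrow> bool) \<Rightarrow> nat \<Rightarrow> bool" where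
  "regular V E r \<longleftrightarrow> (\<forall>x\<in>V. card (nbhd V E x) = r)"

definition cart_V :: "'i set \<Rightarrow> ('i \<Rightarrow> 'v set) \<Rightarrow> ('i \<Rightarrow> 'v) set" where
  "cart_V I V = (\<Pi>\<^sub>E i\<in>I. V i)"

definition cart_E :: "'i set \<Rightarrow> ('i \<Rightarrow> 'v \<Rightarrow> 'v \<Rightarrow> bool) \<Rightarrow> ('i \<Rightarrow> 'v) \<Rightarrow> ('i \<Rightarrow> 'v) \<Rightarrow> bool" where
  "cart_E I E x y \<longleftrightarrow> (\<exists>i\<in>I. E i (x i) (y i) \<and> (\<forall>j\<in>I. j \<noteq> i \<longrightarrow> x j = y j))"

definition group_exponent :: "('a, 'b) monoid_scheme \<Rightarrow> nat" where
  "group_exponent G = (LEAST m. 0 < m \<and> (\<forall>x\<in>carrier G. x [^]\<^bsub>G\<^esub> m = \<one>\<^bsub>G\<^esub>))"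

text \<open>Weight of x: group sum (= finprod in the multiplicative notation) of labels of neighbours.\<close>
definition weight :: "('a, 'b) monoid_scheme \<Rightarrow> 'v set \<Rightarrow> ('v \<Rightarrow> 'v \<Rightarrow> bool) \<Rightarrow> ('v \<Rightarrow> 'a) \<Rightarrow> 'v \<Rightarrow> 'a" where
  "weight A V E f x = finprod A f (nbhd V E x)"

definition dist_antimagic :: "'v set \<Rightarrow> ('v \<Rightarrow> 'v \<Rightarrow> bool) \<Rightarrow> ('a, 'b) monoid_scheme \<Rightarrow> bool" where
  "dist_antimagic V E A \<longleftrightarrow>
     (\<exists>f. bij_betw f V (carrier A) \<and> inj_on (weight A V E f) V)"

definition dist_magic :: "'v set \<Rightarrow> ('v \<Rightarrow> 'v \<Rightarrow> bool) \<Rightarrow> ('a, 'b) monoid_scheme \<Rightarrow> bool" where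
  "dist_magic V E A \<longleftrightarrow>
     (\<exists>f. bij_betw f V (carrier A) \<and> (\<forall>x\<in>V. \<forall>y\<in>V. weight A V E f x = weight A V E f y))"

end

theory Submission imports Defs "HOL-Algebra.Multiplicative_Group" begin

lemma exp_pow_one:
  assumes G: "group G" and fin: "finite (carrier G)" and a: "a \<in> carrier G"
    and d: "group_exponent G dvd n"
  shows "a [^]\<^bsub>G\<^esub> n = \<one>\<^bsub>G\<^esub>"
proof -
  have ex: "\<exists>m::nat. 0 < m \<and> (\<forall>x\<in>carrier G. x [^]\<^bsub>G\<^esub> m = \<one>\<^bsub>G\<^esub>)"
  proof -
    have "carrier G \<noteq> {}" using G by (metis empty_iff group.is_monoid monoid.one_closed)
    then have p0: "0 < order G" using fin by (simp add: order_def card_gt_0_iff)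
    have p1: "\<forall>x\<in>carrier G. x [^]\<^bsub>G\<^esub> order G = \<one>\<^bsub>G\<^esub>"
      using group.pow_order_eq_1[OF G] by blast
    show ?thesis using p0 p1 by blast
  qed
  have "\<forall>x\<in>carrier G. x [^]\<^bsub>G\<^esub> group_exponent G = \<one>\<^bsub>G\<^esub>"
    unfolding group_exponent_def using LeastI_ex[OF ex] by blast
  moreover obtain q where "n = group_exponent G * q" using d by blast
  ultimately have e: "a [^]\<^bsub>G\<^esub> group_exponent G = \<one>\<^bsub>G\<^esub>" and nq: "n = group_exponent G * q"
    using a by auto
  have m: "monoid G" using G group.is_monoid by blast
  have "a [^]\<^bsub>G\<^esub> n = (a [^]\<^bsub>G\<^esub> group_exponent G) [^]\<^bsub>G\<^esub> q"
    unfolding nq by (simp add: monoid.nat_pow_pow[OF m a])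
  also have "\<dots> = \<one>\<^bsub>G\<^esub>" unfolding e by (simp add: monoid.nat_pow_one[OF m])
  finally show ?thesis .
qed

lemma product_comm_group:
  assumes "\<And>i. i \<in> I \<Longrightarrow> comm_group (G i)"
  shows "comm_group (product_group I G)"
proof -
  have gr: "group (product_group I G)"
    using assms by (simp add: comm_group.axioms(2))
  show ?thesis
  proof (rule group.group_comm_groupI[OF gr])
    fix x y assume "x \<in> carrier (product_group I G)" "y \<in> carrier (product_group I G)"
    then have xy: "\<And>i. i \<in> I \<Longrightarrow> x i \<in> carrier (G i) \<and> y i \<in> carrier (G i)" by auto
    have "(\<lambda>i\<in>I. x i \<otimes>\<^bsub>G i\<^esub> y i) = (\<lambda>i\<in>I. y i \<otimes>\<^bsub>G i\<^esub> x i)"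
    proof (rule restrict_ext)
      fix i assume i: "i \<in> I"
      show "x i \<otimes>\<^bsub>G i\<^esub> y i = y i \<otimes>\<^bsub>G i\<^esub> x i"
        using comm_monoid.m_comm[OF comm_group.axioms(1)[OF assms[OF i]]] xy[OF i] by blast
    qed
    then show "x \<otimes>\<^bsub>product_group I G\<^esub> y = y \<otimes>\<^bsub>product_group I G\<^esub> x" by simp
  qed
qed

lemma finprod_product_group:
  assumes cg: "\<And>i. i \<in> I \<Longrightarrow> comm_group (G i)" and S: "finite S"
    and f: "f \<in> S \<rightarrow> carrier (product_group I G)"
  shows "finprod (product_group I G) f S = (\<lambda>i\<in>I. finprod (G i) (\<lambda>s. f s i) S)"
  using S f
proof (induction S rule: finite_induct)
  case empty
  have cm: "comm_monoid (product_group I G)"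
    by (rule comm_group.axioms(1)[OF product_comm_group[OF cg]])
  have cmi: "\<And>i. i \<in> I \<Longrightarrow> comm_monoid (G i)" by (rule comm_group.axioms(1)[OF cg])
  have "finprod (product_group I G) f {} = \<one>\<^bsub>product_group I G\<^esub>" by (rule comm_monoid.finprod_empty[OF cm])
  also have "\<dots> = (\<lambda>i\<in>I. finprod (G i) (\<lambda>s. f s i) {})"
    unfolding one_product_group by (intro restrict_ext) (simp add: comm_monoid.finprod_empty[OF cmi])
  finally show ?case .
next
  case (insert a S)
  have cm: "comm_monoid (product_group I G)"
    by (rule comm_group.axioms(1)[OF product_comm_group[OF cg]])
  have fS: "f \<in> S \<rightarrow> carrier (product_group I G)" and fa: "f a \<in> carrier (product_group I G)"
    using insert.prems by (simp_all add: Pi_iff)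
  have "finprod (product_group I G) f (insert a S) = f a \<otimes>\<^bsub>product_group I G\<^esub> finprod (product_group I G) f S"
    using comm_monoid.finprod_insert[OF cm insert.hyps(1,2) fS fa] .
  also have "\<dots> = (\<lambda>i\<in>I. f a i \<otimes>\<^bsub>G i\<^esub> finprod (G i) (\<lambda>s. f s i) S)"
    unfolding insert.IH[OF fS] mult_product_group by (intro restrict_ext) simp
  also have "\<dots> = (\<lambda>i\<in>I. finprod (G i) (\<lambda>s. f s i) (insert a S))"
  proof (rule restrict_ext)
    fix i assume i: "i \<in> I"
    have cmi: "comm_monoid (G i)" by (rule comm_group.axioms(1)[OF cg[OF i]])
    have "(\<lambda>s. f s i) \<in> S \<rightarrow> carrier (G i)" "f a i \<in> carrier (G i)"
    proof -
      have "f s \<in> (\<Pi>\<^sub>E i\<in>I. carrier (G i))" if "s \<in> S" for s using fS that by (simp add: Pi_iff)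
      then show "(\<lambda>s. f s i) \<in> S \<rightarrow> carrier (G i)" using i by (simp add: Pi_iff PiE_iff)
      show "f a i \<in> carrier (G i)" using fa i by (simp add: PiE_iff)
    qed
    then show "f a i \<otimes>\<^bsub>G i\<^esub> finprod (G i) (\<lambda>s. f s i) S = finprod (G i) (\<lambda>s. f s i) (insert a S)"
      using comm_monoid.finprod_insert[OF cmi insert.hyps(1,2)] by metis
  qed
  finally show ?case .
qed


lemma nbhd_cart:
  assumes sg: "\<And>i. i\<in>I \<Longrightarrow> simple_graph (V i) (E i)" and x: "x \<in> cart_V I V"
  shows "nbhd (cart_V I V) (cart_E I E) x = (\<Union>i\<in>I. (\<lambda>z. x(i:=z)) ` nbhd (V i) (E i) (x i))"
proof (rule equalityI[OF subsetI subsetI])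
  fix y assume "y \<in> nbhd (cart_V I V) (cart_E I E) x"
  then have y: "y \<in> cart_V I V" and "cart_E I E x y" by (auto simp: nbhd_def)
  then obtain i where i: "i \<in> I" "E i (x i) (y i)" "\<forall>j\<in>I. j \<noteq> i \<longrightarrow> x j = y j"
    by (auto simp: cart_E_def)
  have "y = x(i := y i)"
  proof
    fix j show "y j = (x(i := y i)) j"
      using i x y by (cases "j \<in> I") (auto simp: cart_V_def PiE_iff extensional_def)
  qed
  moreover have "y i \<in> nbhd (V i) (E i) (x i)"
    using i y by (auto simp: nbhd_def cart_V_def)
  ultimately show "y \<in> (\<Union>i\<in>I. (\<lambda>z. x(i:=z)) ` nbhd (V i) (E i) (x i))"
    using i by blast
next
  fix y assume "y \<in> (\<Union>i\<in>I. (\<lambda>z. x(i:=z)) ` nbhd (V i) (E i) (x i))"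
  then obtain i z where i: "i \<in> I" "z \<in> V i" "E i (x i) z" and yd: "y = x(i:=z)"
    by (auto simp: nbhd_def)
  have "y \<in> cart_V I V" using x i yd by (auto simp: cart_V_def PiE_iff extensional_def)
  moreover have "cart_E I E x y" using i yd unfolding cart_E_def by auto
  ultimately show "y \<in> nbhd (cart_V I V) (cart_E I E) x" by (simp add: nbhd_def)
qed

lemma cart_weight:
  assumes I: "finite I"
    and sg: "\<And>i. i\<in>I \<Longrightarrow> simple_graph (V i) (E i)"
    and reg: "\<And>i. i\<in>I \<Longrightarrow> regular (V i) (E i) (rr i)"
    and cg: "\<And>i. i\<in>I \<Longrightarrow> comm_group (A i)"
    and fin: "\<And>i. i\<in>I \<Longrightarrow> finite (carrier (A i))"
    and ed: "\<And>i. i\<in>I \<Longrightarrow> group_exponent (A i) dvd ((\<Sum>j\<in>I. rr j) - rr i)"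
    and f: "\<And>i. i\<in>I \<Longrightarrow> f i \<in> V i \<rightarrow> carrier (A i)"
    and x: "x \<in> cart_V I V"
  shows "weight (product_group I A) (cart_V I V) (cart_E I E) (\<lambda>y. \<lambda>i\<in>I. f i (y i)) x
       = (\<lambda>j\<in>I. weight (A j) (V j) (E j) (f j) (x j))"
proof -
  define S where "S i = (\<lambda>z. x(i:=z)) ` nbhd (V i) (E i) (x i)" for i
  define N where "N = nbhd (cart_V I V) (cart_E I E) x"
  have NS: "N = (\<Union>i\<in>I. S i)" using nbhd_cart[OF sg x] by (simp add: N_def S_def)
  have finNi: "finite (nbhd (V i) (E i) (x i))" if "i \<in> I" for i
    using sg[OF that] by (simp add: simple_graph_def nbhd_def)
  have finS: "finite (S i)" if "i \<in> I" for i using finNi[OF that] by (simp add: S_def)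
  have injS: "inj_on (\<lambda>z. x(i:=z)) X" for i X
    by (rule inj_onI) (metis fun_upd_same)
  have xiV: "x i \<in> V i" if "i \<in> I" for i using x that by (auto simp: cart_V_def)
  have cardS: "card (S i) = rr i" if "i \<in> I" for i
    unfolding S_def using card_image[OF injS] reg[OF that] xiV[OF that]
    by (simp add: regular_def)
  have notx: "z \<noteq> x i" if "i \<in> I" "z \<in> nbhd (V i) (E i) (x i)" for i z
    using that sg[OF that(1)] by (auto simp: nbhd_def simple_graph_def)
  have disj: "S i \<inter> S i' = {}" if "i \<in> I" "i' \<in> I" "i \<noteq> i'" for i i'
  proof (rule ccontr)
    assume "S i \<inter> S i' \<noteq> {}"
    then obtain z z' where z: "z \<in> nbhd (V i) (E i) (x i)" and "x(i:=z) = x(i':=z')"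
      by (auto simp: S_def)
    then have "z = x i" using that by (metis fun_upd_apply)
    then show False using notx[OF that(1) z] by simp
  qed
  have finN: "finite N" using NS finS I by auto
  have cardN: "card N = (\<Sum>i\<in>I. rr i)"
    unfolding NS using card_UN_disjoint[OF I, of S] finS disj cardS by simp
  have Fcar: "(\<lambda>y. \<lambda>i\<in>I. f i (y i)) \<in> N \<rightarrow> carrier (product_group I A)"
  proof
    fix y assume "y \<in> N"
    then have "y \<in> cart_V I V" by (simp add: N_def nbhd_def)
    then show "(\<lambda>i\<in>I. f i (y i)) \<in> carrier (product_group I A)"
      using f by (auto simp: cart_V_def PiE_iff)
  qed
  have NV: "y \<in> cart_V I V" if "y \<in> N" for y using that by (simp add: N_def nbhd_def)
  have "weight (product_group I A) (cart_V I V) (cart_E I E) (\<lambda>y. \<lambda>i\<in>I. f i (y i)) x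
     = (\<lambda>j\<in>I. finprod (A j) (\<lambda>y. (\<lambda>i\<in>I. f i (y i)) j) N)"
    unfolding weight_def N_def[symmetric] by (rule finprod_product_group[OF cg finN Fcar])
  also have "\<dots> = (\<lambda>j\<in>I. weight (A j) (V j) (E j) (f j) (x j))"
  proof (rule restrict_ext)
    fix j assume j: "j \<in> I"
    interpret cgj: comm_group "A j" using cg[OF j] .
    let ?g = "\<lambda>y. f j (y j)"
    let ?T = "N - S j"
    have SN: "S j \<subseteq> N" using NS j by auto
    have gcar: "?g \<in> N \<rightarrow> carrier (A j)"
      using NV f[OF j] j by (auto simp: cart_V_def PiE_iff Pi_iff)
    have "finprod (A j) (\<lambda>y. (\<lambda>i\<in>I. f i (y i)) j) N = finprod (A j) ?g N"
      using j gcar by (intro cgj.finprod_cong) auto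
    also have "\<dots> = finprod (A j) ?g (S j \<union> ?T)" by (simp only: Un_Diff_cancel Un_absorb1[OF SN])
    also have "finprod (A j) ?g (S j \<union> ?T) = finprod (A j) ?g (S j) \<otimes>\<^bsub>A j\<^esub> finprod (A j) ?g ?T"
      using SN gcar finN finS[OF j] by (intro cgj.finprod_Un_disjoint) auto
    also have "finprod (A j) ?g (S j) = weight (A j) (V j) (E j) (f j) (x j)"
      unfolding S_def weight_def
    proof (subst cgj.finprod_reindex[OF _ injS])
      show "?g \<in> (\<lambda>z. x(j := z)) ` nbhd (V j) (E j) (x j) \<rightarrow> carrier (A j)"
        using gcar SN by (auto simp: S_def)
      show "(\<Otimes>\<^bsub>A j\<^esub>xa\<in>nbhd (V j) (E j) (x j). f j ((x(j := xa)) j)) = finprod (A j) (f j) (nbhd (V j) (E j) (x j))"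
        by simp
    qed
    also have "finprod (A j) ?g ?T = finprod (A j) (\<lambda>_. f j (x j)) ?T"
    proof (rule cgj.finprod_cong')
      show "(\<lambda>_. f j (x j)) \<in> ?T \<rightarrow> carrier (A j)" using f[OF j] xiV[OF j] by auto
      fix y assume "y \<in> ?T"
      then obtain i where i: "i \<in> I" "y \<in> S i" "i \<noteq> j" using NS by auto
      then show "?g y = f j (x j)" by (auto simp: S_def)
    qed simp
    also have "\<dots> = f j (x j) [^]\<^bsub>A j\<^esub> card ?T"
      using f[OF j] xiV[OF j] by (intro cgj.finprod_const) auto
    also have "card ?T = (\<Sum>i\<in>I. rr i) - rr j"
      using card_Diff_subset[OF finS[OF j] SN] cardN cardS[OF j] by simp
    also have "f j (x j) [^]\<^bsub>A j\<^esub> ((\<Sum>i\<in>I. rr i) - rr j) = \<one>\<^bsub>A j\<^esub>"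
      using exp_pow_one[OF cgj.is_group fin[OF j] _ ed[OF j]] f[OF j] xiV[OF j] by auto
    finally have "finprod (A j) (\<lambda>y. (\<lambda>i\<in>I. f i (y i)) j) N = weight (A j) (V j) (E j) (f j) (x j) \<otimes>\<^bsub>A j\<^esub> \<one>\<^bsub>A j\<^esub>" .
    moreover have "weight (A j) (V j) (E j) (f j) (x j) \<in> carrier (A j)"
      unfolding weight_def using f[OF j] by (intro cgj.finprod_closed) (auto simp: nbhd_def)
    ultimately show "finprod (A j) (\<lambda>y. (\<lambda>i\<in>I. f i (y i)) j) N = weight (A j) (V j) (E j) (f j) (x j)"
      by simp
  qed
  finally show ?thesis .
qed


lemma cartV_eq:
  assumes "y \<in> cart_V I V" "y' \<in> cart_V I V" "\<And>i. i \<in> I \<Longrightarrow> y i = y' i"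
  shows "y = y'"
proof
  fix i show "y i = y' i"
    using assms by (cases "i \<in> I") (auto simp: cart_V_def PiE_iff extensional_def)
qed

lemma bij_cart:
  assumes b: "\<And>i. i \<in> I \<Longrightarrow> bij_betw (f i) (V i) (C i)"
  shows "bij_betw (\<lambda>y. \<lambda>i\<in>I. f i (y i)) (cart_V I V) (\<Pi>\<^sub>E i\<in>I. C i)"
  unfolding bij_betw_def
proof (intro conjI)
  show "inj_on (\<lambda>y. \<lambda>i\<in>I. f i (y i)) (cart_V I V)"
  proof (rule inj_onI)
    fix y y' assume y: "y \<in> cart_V I V" and y': "y' \<in> cart_V I V"
      and e: "(\<lambda>i\<in>I. f i (y i)) = (\<lambda>i\<in>I. f i (y' i))"
    show "y = y'"
    proof (rule cartV_eq[OF y y'])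
      fix i assume i: "i \<in> I"
      have "f i (y i) = f i (y' i)" using fun_cong[OF e, of i] i by simp
      moreover have "y i \<in> V i" "y' i \<in> V i" using y y' i by (auto simp: cart_V_def)
      ultimately show "y i = y' i" using b[OF i] by (auto simp: bij_betw_def inj_on_def)
    qed
  qed
  show "(\<lambda>y. \<lambda>i\<in>I. f i (y i)) ` cart_V I V = (\<Pi>\<^sub>E i\<in>I. C i)"
  proof (rule equalityI[OF subsetI subsetI])
    fix c assume "c \<in> (\<lambda>y. \<lambda>i\<in>I. f i (y i)) ` cart_V I V"
    then obtain y where y: "y \<in> cart_V I V" and c: "c = (\<lambda>i\<in>I. f i (y i))" by blast
    have "f i (y i) \<in> C i" if i: "i \<in> I" for i
      using y i bij_betw_apply[OF b[OF i]] by (auto simp: cart_V_def)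
    then show "c \<in> (\<Pi>\<^sub>E i\<in>I. C i)" unfolding c by simp
  next
    fix c assume c: "c \<in> (\<Pi>\<^sub>E i\<in>I. C i)"
    define y where "y = (\<lambda>i\<in>I. inv_into (V i) (f i) (c i))"
    have "y \<in> cart_V I V" unfolding y_def cart_V_def
    proof (rule restrict_PiE_iff[THEN iffD2], intro ballI)
      fix i assume i: "i \<in> I"
      then have "c i \<in> C i" using c by auto
      then show "inv_into (V i) (f i) (c i) \<in> V i"
        using b[OF i] by (metis bij_betw_def inv_into_into)
    qed
    moreover have "(\<lambda>i\<in>I. f i (y i)) = c"
    proof (rule cartV_eq[of _ I "\<lambda>i. C i"])
      show "(\<lambda>i\<in>I. f i (y i)) \<in> cart_V I C"
        unfolding cart_V_def using calculation bij_betw_apply[OF b] by (auto simp: cart_V_def)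
      show "c \<in> cart_V I C" using c by (simp add: cart_V_def)
      fix i assume i: "i \<in> I"
      then have "c i \<in> C i" using c by auto
      then show "(\<lambda>i\<in>I. f i (y i)) i = c i"
        using i b[OF i] by (simp add: y_def bij_betw_def f_inv_into_f)
    qed
    ultimately show "c \<in> (\<lambda>y. \<lambda>i\<in>I. f i (y i)) ` cart_V I V" by blast
  qed
qed


theorem mainTheorem6:
  fixes k :: nat
    and V :: "nat \<Rightarrow> 'v set"
    and E :: "nat \<Rightarrow> 'v \<Rightarrow> 'v \<Rightarrow> bool"
    and rr :: "nat \<Rightarrow> nat"
    and A :: "nat \<Rightarrow> ('a, 'b) monoid_scheme"
  assumes graphs: "\<And>i. i \<in> {1..k} \<Longrightarrow> simple_graph (V i) (E i)"
    and reg: "\<And>i. i \<in> {1..k} \<Longrightarrow> regular (V i) (E i) (rr i)"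
    and nge2: "\<And>i. i \<in> {1..k} \<Longrightarrow> card (V i) \<ge> 2"
    and abel: "\<And>i. i \<in> {1..k} \<Longrightarrow> comm_group (A i)"
    and ord: "\<And>i. i \<in> {1..k} \<Longrightarrow> order (A i) = card (V i)"
    and expdvd: "\<And>i. i \<in> {1..k} \<Longrightarrow> group_exponent (A i) dvd ((\<Sum>j\<in>{1..k}. rr j) - rr i)"
  shows "((\<forall>i\<in>{1..k}. dist_antimagic (V i) (E i) (A i)) \<longrightarrow>
            dist_antimagic (cart_V {1..k} V) (cart_E {1..k} E) (product_group {1..k} A))
       \<and> ((\<forall>i\<in>{1..k}. dist_magic (V i) (E i) (A i)) \<longrightarrow>
            dist_magic (cart_V {1..k} V) (cart_E {1..k} E) (product_group {1..k} A))"
proof -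
  define I where "I = {1..k}"
  have I: "finite I" by (simp add: I_def)
  have graphs': "\<And>i. i \<in> I \<Longrightarrow> simple_graph (V i) (E i)" using graphs by (simp add: I_def)
  have reg': "\<And>i. i \<in> I \<Longrightarrow> regular (V i) (E i) (rr i)" using reg by (simp add: I_def)
  have abel': "\<And>i. i \<in> I \<Longrightarrow> comm_group (A i)" using abel by (simp add: I_def)
  have expdvd': "\<And>i. i \<in> I \<Longrightarrow> group_exponent (A i) dvd ((\<Sum>j\<in>I. rr j) - rr i)" using expdvd by (simp add: I_def)
  have fin: "finite (carrier (A i))" if "i \<in> I" for i
  proof -
    have "card (carrier (A i)) \<ge> 2" using ord[of i] nge2[of i] that by (simp add: I_def order_def)
    then show ?thesis by (metis card.infinite not_numeral_le_zero)
  qed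
  have W: "weight (product_group I A) (cart_V I V) (cart_E I E) (\<lambda>y. \<lambda>i\<in>I. f i (y i)) x
       = (\<lambda>j\<in>I. weight (A j) (V j) (E j) (f j) (x j))"
    if f: "\<And>i. i\<in>I \<Longrightarrow> bij_betw (f i) (V i) (carrier (A i))" and x: "x \<in> cart_V I V" for f x
    using cart_weight[OF I graphs' reg' abel' fin expdvd' _ x] bij_betw_imp_funcset[OF f] by blast
  have B: "bij_betw (\<lambda>y. \<lambda>i\<in>I. f i (y i)) (cart_V I V) (carrier (product_group I A))"
    if f: "\<And>i. i\<in>I \<Longrightarrow> bij_betw (f i) (V i) (carrier (A i))" for f
    using bij_cart[OF f] by simp
  have a: "dist_antimagic (cart_V I V) (cart_E I E) (product_group I A)"
    if h: "\<forall>i\<in>I. dist_antimagic (V i) (E i) (A i)"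
  proof -
    from h obtain f where f: "\<forall>i\<in>I. bij_betw (f i) (V i) (carrier (A i)) \<and> inj_on (weight (A i) (V i) (E i) (f i)) (V i)"
      unfolding dist_antimagic_def by metis
    have "inj_on (weight (product_group I A) (cart_V I V) (cart_E I E) (\<lambda>y. \<lambda>i\<in>I. f i (y i))) (cart_V I V)"
    proof (rule inj_onI)
      fix y y' assume y: "y \<in> cart_V I V" and y': "y' \<in> cart_V I V"
        and e: "weight (product_group I A) (cart_V I V) (cart_E I E) (\<lambda>y. \<lambda>i\<in>I. f i (y i)) y =
                weight (product_group I A) (cart_V I V) (cart_E I E) (\<lambda>y. \<lambda>i\<in>I. f i (y i)) y'"
      have e2: "(\<lambda>j\<in>I. weight (A j) (V j) (E j) (f j) (y j)) = (\<lambda>j\<in>I. weight (A j) (V j) (E j) (f j) (y' j))"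
        using e W[OF _ y, of f] W[OF _ y', of f] f by simp
      show "y = y'"
      proof (rule cartV_eq[OF y y'])
        fix i assume i: "i \<in> I"
        have "weight (A i) (V i) (E i) (f i) (y i) = weight (A i) (V i) (E i) (f i) (y' i)"
          using fun_cong[OF e2, of i] i by simp
        moreover have "y i \<in> V i" "y' i \<in> V i" using y y' i by (auto simp: cart_V_def)
        ultimately show "y i = y' i" using f i by (auto simp: inj_on_def)
      qed
    qed
    then show ?thesis unfolding dist_antimagic_def using B f by blast
  qed
  have m: "dist_magic (cart_V I V) (cart_E I E) (product_group I A)"
    if h: "\<forall>i\<in>I. dist_magic (V i) (E i) (A i)"
  proof -
    from h obtain f where f: "\<forall>i\<in>I. bij_betw (f i) (V i) (carrier (A i)) \<and> (\<forall>x\<in>V i. \<forall>y\<in>V i. weight (A i) (V i) (E i) (f i) x = weight (A i) (V i) (E i) (f i) y)"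
      unfolding dist_magic_def by metis
    have "\<forall>x\<in>cart_V I V. \<forall>y\<in>cart_V I V. weight (product_group I A) (cart_V I V) (cart_E I E) (\<lambda>y. \<lambda>i\<in>I. f i (y i)) x =
                weight (product_group I A) (cart_V I V) (cart_E I E) (\<lambda>y. \<lambda>i\<in>I. f i (y i)) y"
    proof (intro ballI)
      fix x y assume x: "x \<in> cart_V I V" and y: "y \<in> cart_V I V"
      have "(\<lambda>j\<in>I. weight (A j) (V j) (E j) (f j) (x j)) = (\<lambda>j\<in>I. weight (A j) (V j) (E j) (f j) (y j))"
      proof (rule restrict_ext)
        fix j assume j: "j \<in> I"
        have "x j \<in> V j" "y j \<in> V j" using x y j by (auto simp: cart_V_def)
        then show "weight (A j) (V j) (E j) (f j) (x j) = weight (A j) (V j) (E j) (f j) (y j)"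
          using f j by blast
      qed
      then show "weight (product_group I A) (cart_V I V) (cart_E I E) (\<lambda>y. \<lambda>i\<in>I. f i (y i)) x =
                weight (product_group I A) (cart_V I V) (cart_E I E) (\<lambda>y. \<lambda>i\<in>I. f i (y i)) y"
        using W[OF _ x, of f] W[OF _ y, of f] f by simp
    qed
    then show ?thesis unfolding dist_magic_def using B f by blast
  qed
  show ?thesis using a m by (simp add: I_def)
qed

end
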